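(* Let $G$ be an edge-maximal $K_{3,3}$-minor free graph of order $n\geq 374$ with $n-3\leq \Delta(G)\leq n-2$. Then $q(G)\leq n+2$.
   Context: All graphs are finite, simple and undirected. $q(G)$ is the largest eigenvalue of the signless Laplacian matrix $Q(G)=D(G)+A(G)$. $\Delta(G)$ is the maximum degree of $G$. A graph $H$ is a minor of $G$ if $H$ can be obtained from $G$ by deleting edges, contracting edges, or deleting vertices; $G$ is $H$-minor free if it has no minor isomorphic to $H$. $G$ is edge-maximal $H$-minor free if $G$ is $H$-minor free and adding any edge joining two nonadjacent vertices of $G$ produces a graph having $H$ as a minor. $K_{3,3}$ is the complete bipartite graph with both parts of size 3. *)

theory Defs
  imports Complex_Main
begin

definition simple_graph :: "'a set \<Rightarrow> ('a \<Rightarrow> 'a \<Rightarrow> bool) \<Rightarrow> bool" where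
  "simple_graph V E \<longleftrightarrow> finite V \<and>
     (\<forall>x y. E x y \<longrightarrow> x \<in> V \<and> y \<in> V \<and> x \<noteq> y \<and> E y x)"

definition degree :: "'a set \<Rightarrow> ('a \<Rightarrow> 'a \<Rightarrow> bool) \<Rightarrow> 'a \<Rightarrow> nat" where
  "degree V E v = card {u \<in> V. E v u}"

definition max_degree :: "'a set \<Rightarrow> ('a \<Rightarrow> 'a \<Rightarrow> bool) \<Rightarrow> nat" where
  "max_degree V E = Max (degree V E ` V)"

inductive minor_of :: "'a set \<Rightarrow> ('a \<Rightarrow> 'a \<Rightarrow> bool) \<Rightarrow> 'a set \<Rightarrow> ('a \<Rightarrow> 'a \<Rightarrow> bool) \<Rightarrow> bool"
  for V :: "'a set" and E :: "'a \<Rightarrow> 'a \<Rightarrow> bool" where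
  refl: "minor_of V E V E"
| del_edge: "minor_of V E W F \<Longrightarrow> F u v \<Longrightarrow>
     minor_of V E W (\<lambda>x y. F x y \<and> {x, y} \<noteq> {u, v})"
| del_vertex: "minor_of V E W F \<Longrightarrow> w \<in> W \<Longrightarrow>
     minor_of V E (W - {w}) (\<lambda>x y. F x y \<and> x \<noteq> w \<and> y \<noteq> w)"
| contract: "minor_of V E W F \<Longrightarrow> F u v \<Longrightarrow>
     minor_of V E (W - {v})
       (\<lambda>x y. x \<noteq> y \<and> x \<noteq> v \<and> y \<noteq> v \<and> (F x y \<or> (x = u \<and> F v y) \<or> (y = u \<and> F x v)))"

text \<open>(W,F) is isomorphic to K_{3,3}: vertices {0..5}, parts {0,1,2} and {3,4,5}.\<close>
definition iso_K33 :: "'a set \<Rightarrow> ('a \<Rightarrow> 'a \<Rightarrow> bool) \<Rightarrow> bool" where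
  "iso_K33 W F \<longleftrightarrow> (\<exists>f. bij_betw f W {0..<6::nat} \<and>
     (\<forall>x\<in>W. \<forall>y\<in>W. F x y \<longleftrightarrow> ((f x < 3) \<noteq> (f y < 3))))"

definition has_K33_minor :: "'a set \<Rightarrow> ('a \<Rightarrow> 'a \<Rightarrow> bool) \<Rightarrow> bool" where
  "has_K33_minor V E \<longleftrightarrow> (\<exists>W F. minor_of V E W F \<and> iso_K33 W F)"

definition add_edge :: "('a \<Rightarrow> 'a \<Rightarrow> bool) \<Rightarrow> 'a \<Rightarrow> 'a \<Rightarrow> ('a \<Rightarrow> 'a \<Rightarrow> bool)" where
  "add_edge E u v = (\<lambda>x y. E x y \<or> (x = u \<and> y = v) \<or> (x = v \<and> y = u))"

definition edge_maximal_K33_minor_free :: "'a set \<Rightarrow> ('a \<Rightarrow> 'a \<Rightarrow> bool) \<Rightarrow> bool" where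
  "edge_maximal_K33_minor_free V E \<longleftrightarrow> \<not> has_K33_minor V E \<and>
     (\<forall>u\<in>V. \<forall>v\<in>V. u \<noteq> v \<and> \<not> E u v \<longrightarrow> has_K33_minor V (add_edge E u v))"

definition signless_laplacian_apply ::
  "'a set \<Rightarrow> ('a \<Rightarrow> 'a \<Rightarrow> bool) \<Rightarrow> ('a \<Rightarrow> real) \<Rightarrow> 'a \<Rightarrow> real" where
  "signless_laplacian_apply V E x v =
     real (degree V E v) * x v + (\<Sum>u\<in>{u \<in> V. E v u}. x u)"

definition Q_eigenvalue :: "'a set \<Rightarrow> ('a \<Rightarrow> 'a \<Rightarrow> bool) \<Rightarrow> real \<Rightarrow> bool" where
  "Q_eigenvalue V E mu \<longleftrightarrow> (\<exists>x. (\<exists>v\<in>V. x v \<noteq> 0) \<and>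
     (\<forall>v\<in>V. signless_laplacian_apply V E x v = mu * x v))"

definition q_index :: "'a set \<Rightarrow> ('a \<Rightarrow> 'a \<Rightarrow> bool) \<Rightarrow> real" where
  "q_index V E = Max {mu. Q_eigenvalue V E mu}"

end

theory Submission
  imports Defs "Jordan_Normal_Form.Spectral_Radius"
begin


definition nb :: "'a set \<Rightarrow> ('a \<Rightarrow> 'a \<Rightarrow> bool) \<Rightarrow> 'a \<Rightarrow> 'a set" where
  "nb V E v = {u \<in> V. E v u}"

definition restr :: "('a \<Rightarrow> 'a \<Rightarrow> bool) \<Rightarrow> 'a set \<Rightarrow> ('a \<Rightarrow> 'a \<Rightarrow> bool)" where
  "restr E S = (\<lambda>x y. E x y \<and> x \<in> S \<and> y \<in> S)"

lemma minor_of_eq: "minor_of V E W F \<Longrightarrow> W = W' \<Longrightarrow> F = F' \<Longrightarrow> minor_of V E W' F'"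
  by simp

lemma sgD: "simple_graph V E \<Longrightarrow> E x y \<Longrightarrow> x \<in> V \<and> y \<in> V \<and> x \<noteq> y \<and> E y x"
  unfolding simple_graph_def by blast
lemma sg_fin: "simple_graph V E \<Longrightarrow> finite V"
  unfolding simple_graph_def by blast
lemma sgI: "finite V \<Longrightarrow> (\<And>x y. E x y \<Longrightarrow> x \<in> V \<and> y \<in> V \<and> x \<noteq> y \<and> E y x) \<Longrightarrow> simple_graph V E"
  unfolding simple_graph_def by blast

lemma minor_simple:
  assumes "minor_of V E W F" "simple_graph V E"
  shows "simple_graph W F \<and> W \<subseteq> V"
  using assms
proof (induction rule: minor_of.induct)
  case refl then show ?case by auto
next
  case (del_edge W F u v)
  then have sg: "simple_graph W F" "W \<subseteq> V" by auto
  have "simple_graph W (\<lambda>x y. F x y \<and> {x, y} \<noteq> {u, v})"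
  proof (rule sgI)
    show "finite W" using sg_fin[OF sg(1)] .
    fix x y assume h: "F x y \<and> {x, y} \<noteq> {u, v}"
    have "{y, x} = {x, y}" by (rule insert_commute)
    then show "x \<in> W \<and> y \<in> W \<and> x \<noteq> y \<and> F y x \<and> {y, x} \<noteq> {u, v}" using h sgD[OF sg(1)] by metis
  qed
  then show ?case using sg by blast
next
  case (del_vertex W F w)
  then have sg: "simple_graph W F" "W \<subseteq> V" by auto
  have "simple_graph (W - {w}) (\<lambda>x y. F x y \<and> x \<noteq> w \<and> y \<noteq> w)"
  proof (rule sgI)
    show "finite (W - {w})" using sg_fin[OF sg(1)] by blast
    fix x y assume h: "F x y \<and> x \<noteq> w \<and> y \<noteq> w"
    then show "x \<in> W - {w} \<and> y \<in> W - {w} \<and> x \<noteq> y \<and> F y x \<and> y \<noteq> w \<and> x \<noteq> w" using sgD[OF sg(1)] by blast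
  qed
  then show ?case using sg by blast
next
  case (contract W F u v) 
  then have sg: "simple_graph W F" "W \<subseteq> V" by auto
  have "simple_graph (W - {v}) (\<lambda>x y. x \<noteq> y \<and> x \<noteq> v \<and> y \<noteq> v \<and> (F x y \<or> x = u \<and> F v y \<or> y = u \<and> F x v))"
  proof (rule sgI)
    show "finite (W - {v})" using sg_fin[OF sg(1)] by blast
    fix x y assume h: "x \<noteq> y \<and> x \<noteq> v \<and> y \<noteq> v \<and> (F x y \<or> x = u \<and> F v y \<or> y = u \<and> F x v)"
    have u: "u \<in> W" using sgD[OF sg(1) contract.hyps(2)] by blast
    show "x \<in> W - {v} \<and> y \<in> W - {v} \<and> x \<noteq> y \<and> (y \<noteq> x \<and> y \<noteq> v \<and> x \<noteq> v \<and> (F y x \<or> y = u \<and> F v x \<or> x = u \<and> F y v))"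
      using h u sgD[OF sg(1)] by blast
  qed
  then show ?case using sg by blast
qed
lemma minor_trans:
  assumes "minor_of W1 F1 W F" "minor_of V E W1 F1"
  shows "minor_of V E W F"
  using assms(1)
proof (induction rule: minor_of.induct)
  case refl then show ?case using assms(2) .
next
  case (del_edge W F u v) from minor_of.del_edge[OF del_edge.IH del_edge.hyps(2)] show ?case .
next
  case (del_vertex W F w) from minor_of.del_vertex[OF del_vertex.IH del_vertex.hyps(2)] show ?case .
next
  case (contract W F u v) from minor_of.contract[OF contract.IH contract.hyps(2)] show ?case .
qed

lemma minor_del_set_aux:
  assumes "minor_of V E W F" "simple_graph V E" "finite T"
  shows "T \<subseteq> W \<Longrightarrow> minor_of V E (W - T) (\<lambda>x y. F x y \<and> x \<notin> T \<and> y \<notin> T)"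
  using assms(3)
proof (induction T rule: finite_induct)
  case empty then show ?case using assms(1) by simp
next
  case (insert w T)
  then have w: "w \<in> W - T" by auto
  have IH: "minor_of V E (W - T) (\<lambda>x y. F x y \<and> x \<notin> T \<and> y \<notin> T)" using insert by auto
  from minor_of.del_vertex[OF IH w]
  show ?case by (rule minor_of_eq) (auto simp: fun_eq_iff)
qed

lemma minor_restr:
  assumes "minor_of V E W F" "simple_graph V E" "S \<subseteq> W"
  shows "minor_of V E S (restr F S)"
proof -
  from minor_simple[OF assms(1,2)] have sg: "simple_graph W F" by auto
  then have fin: "finite (W - S)" using sg_fin by blast
  from minor_del_set_aux[OF assms(1,2) fin] have "minor_of V E (W - (W - S)) (\<lambda>x y. F x y \<and> x \<notin> W - S \<and> y \<notin> W - S)" by auto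
  moreover have "W - (W - S) = S" using assms(3) by auto
  moreover have "(\<lambda>x y. F x y \<and> x \<notin> W - S \<and> y \<notin> W - S) = restr F S"
    using sgD[OF sg] unfolding restr_def by (auto simp: fun_eq_iff)
  ultimately show ?thesis by simp
qed

lemma minor_del_edges_aux:
  "\<And>F. card {(x,y). F x y \<and> \<not> F' x y} = k \<Longrightarrow> minor_of V E W F \<Longrightarrow> simple_graph V E \<Longrightarrow>
    (\<forall>x y. F' x y \<longrightarrow> F x y) \<Longrightarrow> (\<forall>x y. F' x y \<longrightarrow> F' y x) \<Longrightarrow> minor_of V E W F'"
proof (induction k rule: less_induct)
  case (less k F)
  from minor_simple[OF less.prems(2,3)] have sg: "simple_graph W F" by auto
  have fin: "finite {(x,y). F x y \<and> \<not> F' x y}"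
    by (rule finite_subset[of _ "W \<times> W"]) (use sgD[OF sg] sg_fin[OF sg] in auto)
  show ?case
  proof (cases "\<exists>u v. F u v \<and> \<not> F' u v")
    case False
    then have "F = F'" using less.prems(4) by (auto simp: fun_eq_iff)
    then show ?thesis using less.prems(2) by simp
  next
    case True
    then obtain u v where uv: "F u v" "\<not> F' u v" by auto
    define F2 where "F2 = (\<lambda>x y. F x y \<and> {x, y} \<noteq> {u, v})"
    have m2: "minor_of V E W F2" unfolding F2_def by (rule minor_of.del_edge[OF less.prems(2) uv(1)])
    have sub: "\<forall>x y. F' x y \<longrightarrow> F2 x y"
      using less.prems(4,5) uv(2) unfolding F2_def by (auto simp: doubleton_eq_iff)
    have ss: "{(x,y). F2 x y \<and> \<not> F' x y} \<subset> {(x,y). F x y \<and> \<not> F' x y}"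
      using uv unfolding F2_def by auto
    have "card {(x,y). F2 x y \<and> \<not> F' x y} < k"
      using psubset_card_mono[OF fin ss] less.prems(1) by simp
    from less.IH[OF this HOL.refl m2 less.prems(3) sub less.prems(5)] show ?thesis .
  qed
qed

lemma minor_del_edges:
  assumes "minor_of V E W F" "simple_graph V E" "\<forall>x y. F' x y \<longrightarrow> F x y" "\<forall>x y. F' x y \<longrightarrow> F' y x"
  shows "minor_of V E W F'"
  using minor_del_edges_aux[OF HOL.refl assms] .

lemma minor_subgraph:
  assumes "minor_of V E W F" "simple_graph V E" "S \<subseteq> W"
    "\<forall>x y. F' x y \<longrightarrow> F x y \<and> x \<in> S \<and> y \<in> S" "\<forall>x y. F' x y \<longrightarrow> F' y x"
  shows "minor_of V E S F'"
  by (rule minor_del_edges[OF minor_restr[OF assms(1,2,3)] assms(2)]) (use assms(4,5) in \<open>auto simp: restr_def\<close>)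

lemma minor_lift:
  assumes "minor_of N G W F" "simple_graph N G" "v \<notin> N"
  shows "minor_of (insert v N) (\<lambda>x y. G x y \<or> (x = v \<and> y \<in> N) \<or> (y = v \<and> x \<in> N))
           (insert v W) (\<lambda>x y. F x y \<or> (x = v \<and> y \<in> W) \<or> (y = v \<and> x \<in> W))"
  using assms(1)
proof (induction rule: minor_of.induct)
  case refl then show ?case by (rule minor_of.refl)
next
  case (del_edge W F u' v')
  from minor_simple[OF del_edge.hyps(1) assms(2)] have sg: "simple_graph W F" "W \<subseteq> N" by auto
  have uv: "u' \<in> W" "v' \<in> W" using sgD[OF sg(1) del_edge.hyps(2)] by blast+
  have "(\<lambda>x y. F x y \<or> (x = v \<and> y \<in> W) \<or> (y = v \<and> x \<in> W)) u' v'" using del_edge.hyps(2) by simp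
  from minor_of.del_edge[OF del_edge.IH this] show ?case
    by (rule minor_of_eq) (use uv sg(2) assms(3) in \<open>auto simp: fun_eq_iff doubleton_eq_iff\<close>)
next
  case (del_vertex W F w)
  from minor_simple[OF del_vertex.hyps(1) assms(2)] have sg: "simple_graph W F" "W \<subseteq> N" by auto
  have w: "w \<in> insert v W" using del_vertex.hyps(2) by simp
  from minor_of.del_vertex[OF del_vertex.IH w] show ?case
    by (rule minor_of_eq) (use del_vertex.hyps(2) sg(2) assms(3) in \<open>auto simp: fun_eq_iff\<close>)
next
  case (contract W F u' v')
  from minor_simple[OF contract.hyps(1) assms(2)] have sg: "simple_graph W F" "W \<subseteq> N" by auto
  have uv: "u' \<in> W" "v' \<in> W" "u' \<noteq> v'" using sgD[OF sg(1) contract.hyps(2)] by blast+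
  have Fw: "\<And>x y. F x y \<Longrightarrow> x \<in> W \<and> y \<in> W \<and> x \<noteq> y" using sg using sgD[OF sg(1)] by blast
  have vW: "v \<notin> W" using sg(2) assms(3) by auto
  have "(\<lambda>x y. F x y \<or> (x = v \<and> y \<in> W) \<or> (y = v \<and> x \<in> W)) u' v'" using contract.hyps(2) by simp
  from minor_of.contract[OF contract.IH this] show ?case
    apply (rule minor_of_eq)
    using uv vW apply blast
    using uv vW Fw by (auto simp: fun_eq_iff)
qed




definition Kst :: "nat \<Rightarrow> 'a set \<Rightarrow> ('a \<Rightarrow> 'a \<Rightarrow> bool) \<Rightarrow> bool" where
  "Kst s W F \<longleftrightarrow> (\<exists>A B. W = A \<union> B \<and> A \<inter> B = {} \<and> finite A \<and> card A = s \<and> card B = 3 \<and>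
      (\<forall>x y. F x y \<longleftrightarrow> (x \<in> A \<and> y \<in> B) \<or> (x \<in> B \<and> y \<in> A)))"

definition hasK :: "nat \<Rightarrow> 'a set \<Rightarrow> ('a \<Rightarrow> 'a \<Rightarrow> bool) \<Rightarrow> bool" where
  "hasK s V E \<longleftrightarrow> (\<exists>W F. minor_of V E W F \<and> Kst s W F)"

definition Dg :: "'a set \<Rightarrow> ('a \<Rightarrow> 'a \<Rightarrow> bool) \<Rightarrow> nat" where
  "Dg V E = (\<Sum>x\<in>V. card (nb V E x))"

lemma hasK_K1:
  assumes sg: "simple_graph V E" and v: "v \<in> V" and d: "3 \<le> card (nb V E v)"
  shows "hasK 1 V E"
proof -
  obtain B where B: "B \<subseteq> nb V E v" "card B = 3" using obtain_subset_with_card_n[OF d] by metis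
  define F where "F = (\<lambda>x y. (x \<in> {v} \<and> y \<in> B) \<or> (x \<in> B \<and> y \<in> {v}))"
  have vB: "v \<notin> B" using B(1) sgD[OF sg] unfolding nb_def by auto
  have BV: "\<And>x. x \<in> B \<Longrightarrow> x \<in> V \<and> E v x \<and> E x v" using B(1) sgD[OF sg] unfolding nb_def by auto
  have "minor_of V E ({v} \<union> B) F"
  proof (rule minor_subgraph[OF minor_of.refl sg])
    show "{v} \<union> B \<subseteq> V" using v BV by auto
    show "\<forall>x y. F x y \<longrightarrow> E x y \<and> x \<in> {v} \<union> B \<and> y \<in> {v} \<union> B" unfolding F_def using BV by auto
    show "\<forall>x y. F x y \<longrightarrow> F y x" unfolding F_def by auto
  qed
  moreover have "Kst 1 ({v} \<union> B) F" unfolding Kst_def 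
    by (rule exI[of _ "{v}"], rule exI[of _ B]) (use vB B(2) in \<open>auto simp: F_def\<close>)
  ultimately show ?thesis unfolding hasK_def by blast
qed

lemma hasK_step:
  assumes sg: "simple_graph V E" and v: "v \<in> V" and H: "hasK s (nb V E v) (restr E (nb V E v))"
  shows "hasK (Suc s) V E"
proof -
  define N where "N = nb V E v"
  have vN: "v \<notin> N" using sgD[OF sg] unfolding N_def nb_def by auto
  have NV: "N \<subseteq> V" unfolding N_def nb_def by auto
  have sgN: "simple_graph N (restr E N)"
  proof (rule sgI)
    show "finite N" using sg_fin[OF sg] NV by (rule finite_subset[rotated])
    fix x y assume "restr E N x y" then show "x \<in> N \<and> y \<in> N \<and> x \<noteq> y \<and> restr E N y x"
      using sgD[OF sg] unfolding restr_def by blast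
  qed
  from H obtain W F A B where m: "minor_of N (restr E N) W F" and W: "W = A \<union> B" "A \<inter> B = {}" "finite A" "card A = s" "card B = 3"
     and F: "\<forall>x y. F x y \<longleftrightarrow> (x \<in> A \<and> y \<in> B) \<or> (x \<in> B \<and> y \<in> A)" unfolding hasK_def Kst_def N_def by blast
  from minor_simple[OF m sgN] have WN: "W \<subseteq> N" by blast
  have L: "minor_of (insert v N) (\<lambda>x y. restr E N x y \<or> (x = v \<and> y \<in> N) \<or> (y = v \<and> x \<in> N)) (insert v W) (\<lambda>x y. F x y \<or> (x = v \<and> y \<in> W) \<or> (y = v \<and> x \<in> W))"
    by (rule minor_lift[OF m sgN vN])
  have eqG: "(\<lambda>x y. restr E N x y \<or> (x = v \<and> y \<in> N) \<or> (y = v \<and> x \<in> N)) = restr E (insert v N)"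
  proof (intro ext iffI)
    fix x y assume "restr E N x y \<or> (x = v \<and> y \<in> N) \<or> (y = v \<and> x \<in> N)"
    then show "restr E (insert v N) x y" using sgD[OF sg] unfolding restr_def N_def nb_def by blast
  next
    fix x y assume "restr E (insert v N) x y"
    then show "restr E N x y \<or> (x = v \<and> y \<in> N) \<or> (y = v \<and> x \<in> N)" using sgD[OF sg] unfolding restr_def N_def nb_def by blast
  qed
  have m1: "minor_of V E (insert v N) (restr E (insert v N))"
    by (rule minor_restr[OF minor_of.refl sg]) (use v NV in auto)
  have m2: "minor_of V E (insert v W) (\<lambda>x y. F x y \<or> (x = v \<and> y \<in> W) \<or> (y = v \<and> x \<in> W))"
    using minor_trans[OF L[unfolded eqG] m1] .
  define F2 where "F2 = (\<lambda>x y. (x \<in> insert v A \<and> y \<in> B) \<or> (x \<in> B \<and> y \<in> insert v A))"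
  have m3: "minor_of V E (insert v W) F2"
    by (rule minor_del_edges[OF m2 sg]) (use F W in \<open>auto simp: F2_def\<close>)
  have vA: "v \<notin> A" "v \<notin> B" using W(1) WN vN by auto
  have "Kst (Suc s) (insert v W) F2"
    unfolding Kst_def by (rule exI[of _ "insert v A"], rule exI[of _ B]) (use W vA in \<open>auto simp: F2_def\<close>)
  then show ?thesis using m3 unfolding hasK_def by blast
qed

lemma contract_count:
  assumes sg: "simple_graph W F" and ab: "F a b"
  shows "Dg W F \<le> Dg (W - {b}) (\<lambda>x y. x \<noteq> y \<and> x \<noteq> b \<and> y \<noteq> b \<and> (F x y \<or> (x = a \<and> F b y) \<or> (y = a \<and> F x b)))
                    + 2 + 2 * card (nb W F a \<inter> nb W F b)"
proof -
  define F' where "F' = (\<lambda>x y. x \<noteq> y \<and> x \<noteq> b \<and> y \<noteq> b \<and> (F x y \<or> (x = a \<and> F b y) \<or> (y = a \<and> F x b)))"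
  define W' where "W' = W - {b}"
  have fin: "finite W" using sg_fin[OF sg] .
  have fin': "finite W'" using fin unfolding W'_def by simp
  have Fd: "\<And>x y. F x y \<Longrightarrow> x \<in> W \<and> y \<in> W \<and> x \<noteq> y \<and> F y x" using sgD[OF sg] .
  define P where "P = (SIGMA x:W. nb W F x)"
  define P' where "P' = (SIGMA x:W'. nb W' F' x)"
  have DP: "Dg W F = card P" unfolding Dg_def P_def
    by (rule card_SigmaI[symmetric]) (use fin in \<open>auto simp: nb_def\<close>)
  have DP': "Dg W' F' = card P'" unfolding Dg_def P'_def
    by (rule card_SigmaI[symmetric]) (use fin' in \<open>auto simp: nb_def\<close>)
  have finP: "finite P" unfolding P_def using fin by (auto simp: nb_def)
  have finP': "finite P'" unfolding P'_def using fin' by (auto simp: nb_def)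
  define Nb where "Nb = nb W F b"
  define Pb where "Pb = (\<lambda>z. (b,z)) ` Nb \<union> (\<lambda>z. (z,b)) ` Nb"
  define Z where "Z = Nb - nb W F a - {a}"
  define X where "X = (\<lambda>z. (a,z)) ` Z \<union> (\<lambda>z. (z,a)) ` Z"
  have finNb: "finite Nb" unfolding Nb_def nb_def using fin by auto
  have finZ: "finite Z" unfolding Z_def using finNb by auto
  have c1: "card P \<le> card (P - Pb) + card Pb"
  proof -
    have "P \<subseteq> (P - Pb) \<union> Pb" by auto
    then have "card P \<le> card ((P - Pb) \<union> Pb)" by (rule card_mono[rotated]) (use finP finNb in \<open>auto simp: Pb_def\<close>)
    also have "\<dots> \<le> card (P - Pb) + card Pb" by (rule card_Un_le)
    finally show ?thesis .
  qed
  have c2: "card Pb \<le> 2 * card Nb"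
  proof -
    have "card Pb \<le> card ((\<lambda>z. (b,z)) ` Nb) + card ((\<lambda>z. (z,b)) ` Nb)" unfolding Pb_def by (rule card_Un_le)
    also have "\<dots> \<le> card Nb + card Nb" using card_image_le[OF finNb] by (intro add_mono) auto
    finally show ?thesis by simp
  qed
  have c3: "card (P - Pb) + card X \<le> card P'"
  proof -
    have sub: "(P - Pb) \<union> X \<subseteq> P'"
    proof
      fix p assume p: "p \<in> (P - Pb) \<union> X"
      show "p \<in> P'"
      proof (cases "p \<in> X")
        case True
        then obtain z where z: "z \<in> Z" "p = (a,z) \<or> p = (z,a)" unfolding X_def by auto
        have zb: "F b z" "z \<in> W" "z \<noteq> b" "z \<noteq> a" "\<not> F a z" using z(1) Fd unfolding Z_def Nb_def nb_def by auto
        have aW: "a \<in> W" "a \<noteq> b" using Fd[OF ab] by auto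
        have "F' a z" "F' z a" unfolding F'_def using zb aW Fd[OF zb(1)] by auto
        then show ?thesis using z(2) zb aW unfolding P'_def W'_def nb_def by auto
      next
        case False
        then have p: "p \<in> P" "p \<notin> Pb" using p by auto
        obtain x y where xy: "p = (x,y)" by (cases p)
        have "F x y" "x \<in> W" "y \<in> W" using p(1) xy unfolding P_def nb_def by auto
        moreover have "x \<noteq> b" "y \<noteq> b" using p xy Fd unfolding Pb_def Nb_def nb_def P_def by auto
        ultimately show ?thesis using xy Fd unfolding P'_def W'_def nb_def F'_def by auto
      qed
    qed
    have disj: "(P - Pb) \<inter> X = {}" unfolding X_def Z_def P_def nb_def using Fd by auto
    have "card (P - Pb) + card X = card ((P - Pb) \<union> X)"
      by (rule card_Un_disjoint[symmetric]) (use finP finZ disj in \<open>auto simp: X_def\<close>)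
    also have "\<dots> \<le> card P'" by (rule card_mono[OF finP' sub])
    finally show ?thesis .
  qed
  have c4: "card X = 2 * card Z"
  proof -
    have "card X = card ((\<lambda>z. (a,z)) ` Z) + card ((\<lambda>z. (z,a)) ` Z)"
      unfolding X_def by (rule card_Un_disjoint) (use finZ in \<open>auto simp: Z_def\<close>)
    also have "\<dots> = card Z + card Z" by (simp add: card_image inj_on_def)
    finally show ?thesis by simp
  qed
  have c5: "card Nb \<le> card Z + card (nb W F a \<inter> nb W F b) + 1"
  proof -
    have "Nb \<subseteq> Z \<union> (nb W F a \<inter> nb W F b) \<union> {a}" unfolding Z_def Nb_def by auto
    then have "card Nb \<le> card (Z \<union> (nb W F a \<inter> nb W F b) \<union> {a})"
      by (rule card_mono[rotated]) (use finZ finNb in \<open>auto simp: Nb_def\<close>)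
    also have "\<dots> \<le> card (Z \<union> (nb W F a \<inter> nb W F b)) + card {a}" by (rule card_Un_le)
    also have "\<dots> \<le> card Z + card (nb W F a \<inter> nb W F b) + 1" using card_Un_le by simp
    finally show ?thesis .
  qed
  from c1 c2 c3 c4 c5 have "card P \<le> card P' + 2 + 2 * card (nb W F a \<inter> nb W F b)" by linarith
  then show ?thesis unfolding DP[symmetric] using DP' unfolding F'_def W'_def by simp
qed




lemma mader:
  fixes V :: "'a set" and E :: "'a \<Rightarrow> 'a \<Rightarrow> bool"
  assumes hyp: "\<And>(N::'a set) G. simple_graph N G \<Longrightarrow> N \<noteq> {} \<Longrightarrow> (\<forall>x\<in>N. c \<le> card (nb N G x)) \<Longrightarrow> hasK s N G"
    and c: "1 \<le> c" and sg: "simple_graph V E" and no: "\<not> hasK (Suc s) V E"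
  shows "Dg V E < 2*c*card V \<or> Dg V E = 0"
proof (rule ccontr)
  assume "\<not> ?thesis"
  then have D0: "2*c*card V \<le> Dg V E" "0 < Dg V E" by auto
  define P where "P k \<longleftrightarrow> (\<exists>W F. minor_of V E W F \<and> card W = k \<and> 2*c*card W \<le> Dg W F \<and> 0 < Dg W F)" for k
  have "P (card V)" using D0 minor_of.refl unfolding P_def by blast
  then obtain k where Pk: "P k" and least: "\<And>k'. k' < k \<Longrightarrow> \<not> P k'" using exists_least_iff[of P] by blast
  then obtain W F where m: "minor_of V E W F" and kW: "card W = k" and DW: "2*c*card W \<le> Dg W F" "0 < Dg W F"
    unfolding P_def by blast
  from minor_simple[OF m sg] have sgW: "simple_graph W F" by blast
  have fin: "finite W" using sg_fin[OF sgW] .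
  have tri: "c \<le> card (nb W F a \<inter> nb W F b)" if ab: "F a b" for a b
  proof (rule ccontr)
    assume "\<not> ?thesis"
    then have t: "card (nb W F a \<inter> nb W F b) + 1 \<le> c" by simp
    define F' where "F' = (\<lambda>x y. x \<noteq> y \<and> x \<noteq> b \<and> y \<noteq> b \<and> (F x y \<or> (x = a \<and> F b y) \<or> (y = a \<and> F x b)))"
    have m': "minor_of V E (W - {b}) F'" using minor_of.contract[OF m ab] unfolding F'_def .
    have cnt: "Dg W F \<le> Dg (W - {b}) F' + 2 + 2 * card (nb W F a \<inter> nb W F b)"
      using contract_count[OF sgW ab] unfolding F'_def .
    have ab': "a \<in> W" "b \<in> W" "a \<noteq> b" using sgD[OF sgW ab] by auto
    have "card {a, b} \<le> card W" by (rule card_mono[OF fin]) (use ab' in auto)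
    then have k2: "2 \<le> k" using ab' kW by simp
    have cW': "card (W - {b}) = k - 1" using ab' kW fin by simp
    have e: "2*c*k = 2*c*(k-1) + 2*c" using k2 by (cases k) (auto simp: algebra_simps)
    have D': "2*c*(k-1) \<le> Dg (W - {b}) F'" using cnt DW(1)[unfolded kW] t e by linarith
    have "2 * c * 1 \<le> 2*c*(k-1)" using k2 by (intro mult_le_mono2) auto
    then have "0 < Dg (W - {b}) F'" using D' c by linarith
    then have "P (k - 1)" unfolding P_def
      by (intro exI[of _ "W - {b}"] exI[of _ F']) (use m' cW' D' in simp)
    moreover have "k - 1 < k" using k2 by simp
    ultimately show False using least by blast
  qed
  have "\<exists>x\<in>W. 0 < card (nb W F x)"
  proof (rule ccontr)
    assume "\<not> ?thesis"
    then have "\<forall>x\<in>W. card (nb W F x) = 0" by auto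
    then have "Dg W F = 0" unfolding Dg_def by simp
    then show False using DW(2) by simp
  qed
  then obtain a where aW: "a \<in> W" and a0: "0 < card (nb W F a)" by blast
  have "nb W F a \<noteq> {}" using a0 by (intro notI) simp
  then obtain b where "b \<in> nb W F a" by blast
  then have ab: "F a b" unfolding nb_def by simp
  define N where "N = nb W F a"
  have NW: "N \<subseteq> W" unfolding N_def nb_def by auto
  have "hasK s N (restr F N)"
  proof (rule hyp)
    show "simple_graph N (restr F N)"
    proof (rule sgI)
      show "finite N" using fin NW by (rule finite_subset[rotated])
      fix x y assume "restr F N x y" then show "x \<in> N \<and> y \<in> N \<and> x \<noteq> y \<and> restr F N y x"
        using sgD[OF sgW] unfolding restr_def by blast
    qed
    show "N \<noteq> {}" using ab sgD[OF sgW ab] unfolding N_def nb_def by auto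
    show "\<forall>x\<in>N. c \<le> card (nb N (restr F N) x)"
    proof
      fix x assume x: "x \<in> N"
      have "nb N (restr F N) x = nb W F a \<inter> nb W F x" using x unfolding N_def nb_def restr_def by auto
      moreover have "F a x" using x unfolding N_def nb_def by simp
      ultimately show "c \<le> card (nb N (restr F N) x)" using tri by simp
    qed
  qed
  then have "hasK (Suc s) W F" using hasK_step[OF sgW aW] unfolding N_def by blast
  then have "hasK (Suc s) V E" unfolding hasK_def using minor_trans m by blast
  then show False using no by blast
qed

lemma sum_ge_card: "finite N \<Longrightarrow> (\<forall>x\<in>N. c \<le> f x) \<Longrightarrow> c * card N \<le> (\<Sum>x\<in>N. f x :: nat)"
  using sum_mono[of N "\<lambda>_. c" f] by (simp add: mult.commute)

lemma K2_hyp: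
  assumes sg: "simple_graph N G" and ne: "N \<noteq> {}" and d: "\<forall>x\<in>N. 6 \<le> card (nb N G x)"
  shows "hasK 2 N G"
proof (rule ccontr)
  assume no: "\<not> hasK 2 N G"
  have hyp: "hasK 1 M H" if h1: "simple_graph M H" and h2: "M \<noteq> {}" and h3: "\<forall>x\<in>M. 3 \<le> card (nb M H x)" for M :: "'a set" and H
  proof -
    obtain x where x: "x \<in> M" using h2 by blast
    show ?thesis using hasK_K1[OF h1 x] h3 x by blast
  qed
  have no': "\<not> hasK (Suc 1) N G" using no by (simp add: numeral_2_eq_2)
  have "Dg N G < 2*3*card N \<or> Dg N G = 0" by (rule mader[of 3 1 N G, OF hyp _ sg no']) simp_all
  moreover have "6 * card N \<le> Dg N G" unfolding Dg_def using sum_ge_card[OF sg_fin[OF sg] d] .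
  moreover have "0 < card N" using ne sg_fin[OF sg] by auto
  ultimately show False by linarith
qed

lemma edge_bound:
  assumes sg: "simple_graph V E" and no: "\<not> hasK 3 V E" and ne: "V \<noteq> {}"
  shows "Dg V E < 12 * card V"
proof -
  have no': "\<not> hasK (Suc 2) V E" using no by (simp add: numeral_3_eq_3)
  have "Dg V E < 2*6*card V \<or> Dg V E = 0" by (rule mader[of 6 2 V E, OF K2_hyp _ sg no']) simp_all
  moreover have "0 < card V" using ne sg_fin[OF sg] by auto
  ultimately show ?thesis by auto
qed

lemma Kst3_iso:
  assumes "Kst 3 W F" shows "iso_K33 W F"
proof -
  from assms obtain A B where W: "W = A \<union> B" "A \<inter> B = {}" "card A = 3" "card B = 3"
     and F: "\<forall>x y. F x y \<longleftrightarrow> (x \<in> A \<and> y \<in> B) \<or> (x \<in> B \<and> y \<in> A)" unfolding Kst_def by blast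
  from W(3) obtain a0 a1 a2 where A: "A = {a0, a1, a2}" "a0 \<noteq> a1" "a1 \<noteq> a2" "a0 \<noteq> a2" unfolding card_3_iff by blast
  from W(4) obtain b0 b1 b2 where B: "B = {b0, b1, b2}" "b0 \<noteq> b1" "b1 \<noteq> b2" "b0 \<noteq> b2" unfolding card_3_iff by blast
  define f where "f x = (if x = a0 then 0 else if x = a1 then 1 else if x = a2 then 2 else
      if x = b0 then 3 else if x = b1 then 4 else (5::nat))" for x
  have dis: "a0 \<noteq> b0" "a0 \<noteq> b1" "a0 \<noteq> b2" "a1 \<noteq> b0" "a1 \<noteq> b1" "a1 \<noteq> b2" "a2 \<noteq> b0" "a2 \<noteq> b1" "a2 \<noteq> b2"
    using W(2) unfolding A(1) B(1) by auto
  have vals: "f a0 = 0" "f a1 = 1" "f a2 = 2" "f b0 = 3" "f b1 = 4" "f b2 = 5"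
    unfolding f_def using A(2-4) B(2-4) dis by simp_all
  have W6: "W = {a0, a1, a2, b0, b1, b2}" using W(1) A(1) B(1) by auto
  have fA: "(f x < 3) \<longleftrightarrow> x \<in> A" if "x \<in> W" for x
    using that unfolding W6 A(1) using vals A(2-4) B(2-4) dis by auto
  have inj: "inj_on f W" unfolding W6 inj_on_def by (simp add: vals)
  have six: "{0..<6::nat} = {0, 1, 2, 3, 4, 5}" by auto
  have img: "f ` W = {0..<6}" unfolding W6 six by (simp add: vals)
  have "bij_betw f W {0..<6}" unfolding bij_betw_def using inj img by blast
  moreover have "\<forall>x\<in>W. \<forall>y\<in>W. F x y \<longleftrightarrow> ((f x < 3) \<noteq> (f y < 3))"
  proof (intro ballI)
    fix x y assume x: "x \<in> W" and y: "y \<in> W"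
    have "x \<in> B \<longleftrightarrow> x \<notin> A" "y \<in> B \<longleftrightarrow> y \<notin> A" using x y W(1,2) by auto
    then show "F x y \<longleftrightarrow> ((f x < 3) \<noteq> (f y < 3))" using fA[OF x] fA[OF y] F by auto
  qed
  ultimately show ?thesis unfolding iso_K33_def by blast
qed

lemma hasK3_K33: "hasK 3 V E \<Longrightarrow> has_K33_minor V E"
  unfolding hasK_def has_K33_minor_def using Kst3_iso by blast

lemma triple_common:
  assumes sg: "simple_graph V E" and no: "\<not> has_K33_minor V E"
    and abc: "a \<in> V" "b \<in> V" "c \<in> V" "a \<noteq> b" "b \<noteq> c" "a \<noteq> c"
  shows "card {x \<in> V. E a x \<and> E b x \<and> E c x} \<le> 2"
proof (rule ccontr)
  assume "\<not> ?thesis"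
  then have "3 \<le> card {x \<in> V. E a x \<and> E b x \<and> E c x}" by simp
  then obtain B where B: "B \<subseteq> {x \<in> V. E a x \<and> E b x \<and> E c x}" "card B = 3"
  proof (rule obtain_subset_with_card_n)
    fix T assume "T \<subseteq> {x \<in> V. E a x \<and> E b x \<and> E c x}" "card T = 3" "finite T"
    then show ?thesis using that by blast
  qed
  define A where "A = {a, b, c}"
  have cA: "card A = 3" unfolding A_def using abc by simp
  have Bx: "\<And>x. x \<in> B \<Longrightarrow> x \<in> V \<and> E a x \<and> E b x \<and> E c x \<and> E x a \<and> E x b \<and> E x c \<and> x \<noteq> a \<and> x \<noteq> b \<and> x \<noteq> c"
  proof -
    fix x assume "x \<in> B"
    then have x: "x \<in> V" "E a x" "E b x" "E c x" using B(1) by auto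
    show "x \<in> V \<and> E a x \<and> E b x \<and> E c x \<and> E x a \<and> E x b \<and> E x c \<and> x \<noteq> a \<and> x \<noteq> b \<and> x \<noteq> c"
      using x sgD[OF sg x(2)] sgD[OF sg x(3)] sgD[OF sg x(4)] by auto
  qed
  have AB: "A \<inter> B = {}" using Bx unfolding A_def by blast
  define F where "F = (\<lambda>x y. (x \<in> A \<and> y \<in> B) \<or> (x \<in> B \<and> y \<in> A))"
  have "minor_of V E (A \<union> B) F"
  proof (rule minor_subgraph[OF minor_of.refl sg])
    show "A \<union> B \<subseteq> V" using abc Bx unfolding A_def by auto
    show "\<forall>x y. F x y \<longrightarrow> E x y \<and> x \<in> A \<union> B \<and> y \<in> A \<union> B"
      unfolding F_def A_def using Bx by auto
    show "\<forall>x y. F x y \<longrightarrow> F y x" unfolding F_def by blast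
  qed
  moreover have "Kst 3 (A \<union> B) F" unfolding Kst_def
    by (rule exI[of _ A], rule exI[of _ B]) (use cA B(2) AB in \<open>auto simp: F_def A_def\<close>)
  ultimately have "hasK 3 V E" unfolding hasK_def by blast
  then show False using no hasK3_K33 by blast
qed

lemma deg3:
  assumes sg: "simple_graph V E" and no: "\<not> has_K33_minor V E"
    and abc: "a \<in> V" "b \<in> V" "c \<in> V" "a \<noteq> b" "b \<noteq> c" "a \<noteq> c"
  shows "card (nb V E a) + card (nb V E b) + card (nb V E c) \<le> 2 * card V + 2"
proof -
  have fin: "finite V" using sg_fin[OF sg] .
  define C where "C = {x \<in> V. E a x \<and> E b x \<and> E c x}"
  have cC: "card C \<le> 2" using triple_common[OF assms] unfolding C_def .
  have cnt: "card (nb V E u) = (\<Sum>x\<in>V. if E u x then 1 else 0)" for u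
    unfolding nb_def card_eq_sum by (rule sum.inter_filter[OF fin])
  have cntC: "card C = (\<Sum>x\<in>V. if x \<in> C then 1 else 0)"
  proof -
    have e: "{x \<in> V. x \<in> C} = C" unfolding C_def by auto
    have "card C = (\<Sum>x\<in>{x \<in> V. x \<in> C}. 1)" unfolding e by (rule card_eq_sum)
    also have "\<dots> = (\<Sum>x\<in>V. if x \<in> C then 1 else 0)" by (rule sum.inter_filter[OF fin])
    finally show ?thesis .
  qed
  have "card (nb V E a) + card (nb V E b) + card (nb V E c) =
      (\<Sum>x\<in>V. (if E a x then 1 else 0) + (if E b x then 1 else 0) + (if E c x then 1 else 0))"
    unfolding cnt by (simp add: sum.distrib)
  also have "\<dots> \<le> (\<Sum>x\<in>V. 2 + (if x \<in> C then 1 else 0))"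
  proof (rule sum_mono)
    fix x assume x: "x \<in> V"
    show "(if E a x then 1 else 0) + (if E b x then 1 else 0) + (if E c x then 1 else 0) \<le> 2 + (if x \<in> C then 1 else (0::nat))"
      using x by (cases "E a x"; cases "E b x"; cases "E c x") (simp_all add: C_def)
  qed
  also have "\<dots> = (\<Sum>x\<in>V. 2) + (\<Sum>x\<in>V. if x \<in> C then 1 else 0)" by (rule sum.distrib)
  also have "\<dots> = 2 * card V + card C" unfolding cntC by simp
  finally show ?thesis using cC by linarith
qed




lemma eig_bound:
  assumes sg: "simple_graph V E" and gpos: "\<forall>v\<in>V. 0 < g v"
    and cond: "\<forall>v\<in>V. real (Defs.degree V E v) * g v + (\<Sum>u\<in>{u \<in> V. E v u}. g u) \<le> M * g v"
    and ev: "Q_eigenvalue V E mu"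
  shows "mu \<le> M"
proof -
  from ev obtain x where x0: "\<exists>v\<in>V. x v \<noteq> 0" and xe: "\<forall>v\<in>V. signless_laplacian_apply V E x v = mu * x v"
    unfolding Q_eigenvalue_def by blast
  have fin: "finite V" using sg_fin[OF sg] .
  have ne: "V \<noteq> {}" using x0 by blast
  define r where "r = Max ((\<lambda>v. \<bar>x v\<bar> / g v) ` V)"
  have "r \<in> (\<lambda>v. \<bar>x v\<bar> / g v) ` V" unfolding r_def using fin ne by (intro Max_in) auto
  then obtain v0 where v0: "v0 \<in> V" "r = \<bar>x v0\<bar> / g v0" by blast
  have rge: "\<bar>x u\<bar> \<le> r * g u" if "u \<in> V" for u
  proof -
    have "\<bar>x u\<bar> / g u \<le> r" unfolding r_def using fin that by (intro Max_ge) auto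
    then show ?thesis using gpos that by (simp add: divide_le_eq)
  qed
  obtain w where w: "w \<in> V" "x w \<noteq> 0" using x0 by blast
  have rpos: "0 < r"
  proof -
    have "0 < \<bar>x w\<bar>" using w by simp
    also have "\<dots> \<le> r * g w" using rge[OF w(1)] .
    finally have "0 < r * g w" .
    moreover have "0 < g w" using gpos w(1) by blast
    ultimately show ?thesis by (simp add: zero_less_mult_iff)
  qed
  have xv0: "\<bar>x v0\<bar> = r * g v0"
  proof -
    have "0 < g v0" using gpos v0(1) by blast
    then show ?thesis using v0(2) by simp
  qed
  define S where "S = {u \<in> V. E v0 u}"
  have SV: "S \<subseteq> V" unfolding S_def by auto
  have "\<bar>mu\<bar> * \<bar>x v0\<bar> = \<bar>real (Defs.degree V E v0) * x v0 + (\<Sum>u\<in>S. x u)\<bar>"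
    using xe v0(1) unfolding signless_laplacian_apply_def S_def by (simp add: abs_mult)
  also have "\<dots> \<le> real (Defs.degree V E v0) * \<bar>x v0\<bar> + (\<Sum>u\<in>S. \<bar>x u\<bar>)"
    by (rule order_trans[OF abs_triangle_ineq]) (simp add: abs_mult sum_abs)
  also have "\<dots> \<le> real (Defs.degree V E v0) * (r * g v0) + (\<Sum>u\<in>S. r * g u)"
    using rge SV xv0 by (intro add_mono sum_mono) auto
  also have "\<dots> = r * (real (Defs.degree V E v0) * g v0 + (\<Sum>u\<in>S. g u))"
    by (simp add: sum_distrib_left algebra_simps)
  also have "\<dots> \<le> r * (M * g v0)" using cond v0(1) rpos unfolding S_def by (intro mult_left_mono) auto
  finally have "\<bar>mu\<bar> * (r * g v0) \<le> M * (r * g v0)" unfolding xv0 by (simp add: algebra_simps)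
  then have "\<bar>mu\<bar> \<le> M" using rpos gpos v0(1) by (simp add: mult_le_cancel_right zero_less_mult_iff)
  then show ?thesis by simp
qed

lemma inv_pair: fixes a b :: real assumes "4 \<le> a" "4 \<le> b"
  shows "1/a + 1/b \<le> 1/4 + 1/(a+b-4)"
proof -
  have ab: "4*(a+b) - 16 \<le> a*b" using mult_mono[of 0 "a-4" 0 "b-4"] assms by (simp add: algebra_simps) 
  have "1/a + 1/b = (a+b)/(a*b)" using assms by (simp add: field_simps)
  also have "\<dots> \<le> (a+b)/(4*(a+b-4))" using ab assms by (intro divide_left_mono) auto
  also have "\<dots> = 1/4 + 1/(a+b-4)" using assms by (simp add: field_simps)
  finally show ?thesis .
qed




lemma small_bound:
  fixes n d :: real assumes n: "374 \<le> n" and d: "0 \<le> d" "d \<le> (2*n+2)/3"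
  shows "1/(n+2-d) \<le> 1/(n+2) + (3/((n+2)*(n+4))) * d"
proof -
  have m: "0 < n+2" using n by simp
  have md: "(n+4)/3 \<le> n+2-d" using d by (simp add: field_simps)
  have "0 < (n+4)/3" using n by simp
  then have mdp: "0 < n+2-d" using md by linarith
  have "1/(n+2-d) - 1/(n+2) = (1*(n+2) - 1*(n+2-d))/((n+2-d)*(n+2))"
    using m mdp by (intro diff_frac_eq) auto
  also have "\<dots> = d/((n+2)*(n+2-d))" by (simp add: mult.commute)
  finally have "1/(n+2-d) = 1/(n+2) + d/((n+2)*(n+2-d))" by simp
  also have "d/((n+2)*(n+2-d)) \<le> d/((n+2)*((n+4)/3))"
    using d(1) m n md by (intro divide_left_mono mult_left_mono mult_pos_pos) auto
  also have "d/((n+2)*((n+4)/3)) = (3/((n+2)*(n+4))) * d" by (simp add: field_simps)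
  finally show ?thesis by simp
qed

lemma E0_bound:
  fixes n D :: real assumes n: "374 \<le> n" and D: "D < 12*n"
  shows "3/((n+2)*(n+4)) * D \<le> 1/10"
proof -
  have p: "0 < (n+2)*(n+4)" using n by simp
  have "36*n \<le> (n+2)*(n+4)/10"
  proof -
    have "374 * 20 \<le> n * (n - 354)" using n by (intro mult_mono) auto
    then show ?thesis by (simp add: algebra_simps)
  qed
  then have "3*D \<le> (n+2)*(n+4)/10" using D by linarith
  then show ?thesis using p by (simp add: field_simps)
qed

lemma vertex_ineq:
  fixes N :: "'b set" and d :: "'b \<Rightarrow> real" and n D :: real
  assumes n: "374 \<le> n" and fin: "finite N"
    and dvle: "real (card N) \<le> n - 2" and dle: "\<forall>w\<in>N. 0 \<le> d w \<and> d w \<le> n - 2"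
    and Dsum: "(\<Sum>w\<in>N. d w) \<le> D" and D: "D < 12 * n"
    and big: "card {w\<in>N. (2*n+2)/3 < d w} \<le> 2"
    and pair: "\<forall>b1\<in>N. \<forall>b2\<in>N. b1 \<noteq> b2 \<longrightarrow> (2*n+2)/3 < d b1 \<longrightarrow> (2*n+2)/3 < d b2 \<longrightarrow>
                 real (card N) + d b1 + d b2 \<le> 2*n+2"
  shows "(\<Sum>w\<in>N. 1/(n + 2 - d w)) \<le> (4*real (card N) + 3*(n+2))/(5*(n+2))"
proof -
  define m where "m = n + 2"
  define dv where "dv = real (card N)"
  define Bv where "Bv = {w\<in>N. (2*n+2)/3 < d w}"
  define Rv where "Rv = N - Bv"
  define c where "c = 3/((n+2)*(n+4))"
  have mpos: "0 < m" using n unfolding m_def by simp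
  have BvN: "Bv \<subseteq> N" unfolding Bv_def by auto
  have finB: "finite Bv" using fin BvN by (rule finite_subset[rotated])
  have split: "(\<Sum>w\<in>N. 1/(n+2-d w)) = (\<Sum>w\<in>Rv. 1/(n+2-d w)) + (\<Sum>w\<in>Bv. 1/(n+2-d w))"
    unfolding Rv_def by (rule sum.subset_diff[OF BvN fin])
  have cR: "real (card Rv) = dv - real (card Bv)"
    unfolding Rv_def dv_def using card_Diff_subset[OF finB BvN] card_mono[OF fin BvN] by simp
  have R1: "(\<Sum>w\<in>Rv. 1/(n+2-d w)) \<le> (\<Sum>w\<in>Rv. 1/m + c * d w)"
  proof (rule sum_mono)
    fix w assume w: "w \<in> Rv"
    then have "0 \<le> d w" "d w \<le> (2*n+2)/3" using dle unfolding Rv_def Bv_def by auto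
    from small_bound[OF n this] show "1/(n+2-d w) \<le> 1/m + c * d w" unfolding m_def c_def by simp
  qed
  have R2: "(\<Sum>w\<in>Rv. 1/m + c * d w) = real (card Rv)/m + c * (\<Sum>w\<in>Rv. d w)"
    by (simp add: sum.distrib sum_distrib_left)
  have sRD: "(\<Sum>w\<in>Rv. d w) \<le> D"
  proof -
    have "(\<Sum>w\<in>Rv. d w) \<le> (\<Sum>w\<in>N. d w)" unfolding Rv_def
      by (rule sum_mono2[OF fin]) (use dle in auto)
    then show ?thesis using Dsum by linarith
  qed
  have cpos: "0 \<le> c" unfolding c_def using n by simp
  have E0: "c * D \<le> 1/10" unfolding c_def using E0_bound[OF n D] .
  have R: "(\<Sum>w\<in>Rv. 1/(n+2-d w)) \<le> (dv - real (card Bv))/m + 1/10"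
  proof -
    have "c * (\<Sum>w\<in>Rv. d w) \<le> c * D" using sRD cpos by (rule mult_left_mono)
    moreover have "real (card Rv)/m = (dv - real (card Bv))/m" using cR by simp
    ultimately show ?thesis using R1 R2 E0 by linarith
  qed
  have phiB: "1/(n+2-d w) \<le> 1/4" if "w \<in> N" for w
  proof -
    have "4 \<le> n+2-d w" using dle that by auto
    then show ?thesis by (simp add: divide_le_eq)
  qed
  have dvm: "dv \<le> m" using dvle unfolding dv_def m_def by simp
  have goal_eq: "(4*dv + 3*m)/(5*m) = 4/5 * (dv/m) + 3/5" using mpos by (simp add: field_simps)
  have cB: "card Bv \<le> 2" using big unfolding Bv_def .
  show ?thesis
  proof (cases "card Bv \<le> 1")
    case True
    have SB: "(\<Sum>w\<in>Bv. 1/(n+2-d w)) \<le> real (card Bv) * (1/4)"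
      using sum_mono[of Bv "\<lambda>w. 1/(n+2-d w)" "\<lambda>_. 1/4"] phiB BvN by auto
    have t1: "real (card Bv) * (1/4) - real (card Bv)/m \<le> 1/4"
    proof -
      have "0 \<le> real (card Bv)/m" using mpos by simp
      moreover have "real (card Bv) * (1/4) \<le> 1/4" using True by simp
      ultimately show ?thesis by linarith
    qed
    have t2: "(dv - real (card Bv))/m = dv/m - real (card Bv)/m" by (simp add: diff_divide_distrib)
    have t3: "dv/m \<le> 1" using dvm mpos by simp
    have "(\<Sum>w\<in>N. 1/(n+2-d w)) \<le> 1/4 + dv/m + 1/10" using split R SB t1 t2 by linarith
    also have "\<dots> \<le> 4/5 * (dv/m) + 3/5" using t3 by linarith
    finally show ?thesis unfolding goal_eq[unfolded m_def dv_def] m_def dv_def .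
  next
    case False
    then have "card Bv = 2" using cB by simp
    then obtain b1 b2 where B: "Bv = {b1, b2}" "b1 \<noteq> b2" unfolding card_2_iff by blast
    have b: "b1 \<in> N" "b2 \<in> N" "(2*n+2)/3 < d b1" "(2*n+2)/3 < d b2" using B unfolding Bv_def by auto
    have trip: "dv + d b1 + d b2 \<le> 2*n+2" using pair b B(2) unfolding dv_def by blast
    define a1 where "a1 = n+2-d b1"
    define a2 where "a2 = n+2-d b2"
    have a4: "4 \<le> a1" "4 \<le> a2" using dle b unfolding a1_def a2_def by auto
    have SB: "(\<Sum>w\<in>Bv. 1/(n+2-d w)) = 1/a1 + 1/a2" unfolding B(1) a1_def a2_def using B(2) by simp
    have t2: "(dv - 2)/m = dv/m - 2/m" by (simp add: diff_divide_distrib)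
    have main: "(\<Sum>w\<in>N. 1/(n+2-d w)) \<le> 1/a1 + 1/a2 + dv/m - 2/m + 1/10"
      using split R SB t2 \<open>card Bv = 2\<close> by simp
    have dvnat: "dv \<le> 6 \<or> 7 \<le> dv" unfolding dv_def by (cases "card N \<le> 6") auto
    show ?thesis
    proof (cases "dv \<le> 6")
      case True
      have "1/a1 \<le> 1/4" "1/a2 \<le> 1/4" using a4 by (simp_all add: divide_le_eq)
      moreover have "dv/m - 2/m \<le> 4/5 * (dv/m)"
      proof -
        have "dv/m - 2/m - 4/5*(dv/m) = (dv - 10)/(5*m)" using mpos by (simp add: field_simps)
        also have "\<dots> \<le> 0" using True mpos by (intro divide_nonpos_pos) auto
        finally show ?thesis by simp
      qed
      ultimately have "(\<Sum>w\<in>N. 1/(n+2-d w)) \<le> 4/5 * (dv/m) + 3/5" using main by linarith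
      then show ?thesis unfolding goal_eq[unfolded m_def dv_def] m_def dv_def .
    next
      case False
      then have dv7: "7 \<le> dv" using dvnat by simp
      have s: "dv - 2 \<le> a1 + a2 - 4" using trip unfolding a1_def a2_def by simp
      have ip: "1/a1 + 1/a2 \<le> 1/4 + 1/(dv - 2)"
      proof -
        have "1/(a1+a2-4) \<le> 1/(dv-2)" using s dv7 by (intro divide_left_mono) auto
        then show ?thesis using inv_pair[OF a4] by linarith
      qed
      have key: "1/(dv-2) + 1/5 * (dv/m) - 2/m \<le> 1/4"
      proof (cases "dv \<le> 20")
        case True
        have "1/(dv-2) \<le> 1/5" using dv7 by (simp add: divide_le_eq)
        moreover have "1/5 * (dv/m) \<le> 4/m" using True mpos by (simp add: divide_le_eq field_simps)
        moreover have "4/m \<le> 1/20" using n mpos unfolding m_def by (simp add: divide_le_eq)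
        moreover have "0 \<le> 2/m" using mpos by simp
        ultimately show ?thesis by linarith
      next
        case False
        have "1/(dv-2) \<le> 1/18" using False by (simp add: divide_le_eq)
        moreover have "dv \<le> 2*m/3"
        proof -
          have "2*n+2 < 3 * d b1" "2*n+2 < 3 * d b2" using b(3,4) by (simp_all add: field_simps)
          then have "3 * dv \<le> 2 * m" using trip unfolding m_def by (smt (verit))
          then show ?thesis by (simp add: field_simps)
        qed
        then have "dv/m \<le> 2/3" using mpos by (simp add: divide_le_eq field_simps)
        moreover have "0 \<le> 2/m" using mpos by simp
        ultimately show ?thesis by linarith
      qed
      have "(\<Sum>w\<in>N. 1/(n+2-d w)) \<le> 4/5 * (dv/m) + 3/5" using main ip key by linarith
      then show ?thesis unfolding goal_eq[unfolded m_def dv_def] m_def dv_def .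
    qed
  qed
qed




definition qc :: "'a set \<Rightarrow> ('a \<Rightarrow> 'a \<Rightarrow> bool) \<Rightarrow> 'a \<Rightarrow> 'a \<Rightarrow> real" where
  "qc V E a b = (if a = b then real (Defs.degree V E a) else 0) + (if E a b then 1 else 0)"

lemma sla_qc:
  assumes fin: "finite V" and a: "a \<in> V"
  shows "signless_laplacian_apply V E x a = (\<Sum>b\<in>V. qc V E a b * x b)"
proof -
  have "(\<Sum>b\<in>V. qc V E a b * x b) = (\<Sum>b\<in>V. (if a = b then real (Defs.degree V E a) * x b else 0)) + (\<Sum>b\<in>V. (if E a b then x b else 0))"
    unfolding qc_def by (subst sum.distrib[symmetric]) (rule sum.cong, auto simp: algebra_simps)
  also have "(\<Sum>b\<in>V. (if a = b then real (Defs.degree V E a) * x b else 0)) = real (Defs.degree V E a) * x a"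
    using fin a by simp
  also have "(\<Sum>b\<in>V. (if E a b then x b else 0)) = (\<Sum>b\<in>{u \<in> V. E a u}. x b)"
    using sum.inter_filter[OF fin, of x "E a"] by simp
  finally show ?thesis unfolding signless_laplacian_apply_def by simp
qed

lemma qc_sym: "simple_graph V E \<Longrightarrow> qc V E a b = qc V E b a"
  unfolding qc_def using sgD by fastforce

definition Qm :: "'a set \<Rightarrow> ('a \<Rightarrow> 'a \<Rightarrow> bool) \<Rightarrow> (nat \<Rightarrow> 'a) \<Rightarrow> real mat" where
  "Qm V E f = mat (card V) (card V) (\<lambda>(i,j). qc V E (f i) (f j))"

lemma Qeig_imp_eig:
  assumes sg: "simple_graph V E" and f: "bij_betw f {0..<card V} V" and ev: "Q_eigenvalue V E mu"
  shows "eigenvalue (Qm V E f) mu"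
proof -
  have fin: "finite V" using sg_fin[OF sg] .
  define n where "n = card V"
  from ev obtain x where x0: "\<exists>v\<in>V. x v \<noteq> 0" and xe: "\<forall>v\<in>V. signless_laplacian_apply V E x v = mu * x v"
    unfolding Q_eigenvalue_def by blast
  define w where "w = vec n (\<lambda>i. x (f i))"
  have wc: "w \<in> carrier_vec n" unfolding w_def by simp
  have w0: "w \<noteq> 0\<^sub>v n"
  proof
    assume h: "w = 0\<^sub>v n"
    from x0 obtain a where a: "a \<in> V" "x a \<noteq> 0" by blast
    have "a \<in> f ` {0..<card V}" using f a(1) by (simp add: bij_betw_def)
    then obtain i where i: "i < n" "f i = a" unfolding n_def by auto
    have "w $ i = 0" using h i by simp
    then show False using i a unfolding w_def by simp
  qed
  have "Qm V E f *\<^sub>v w = mu \<cdot>\<^sub>v w"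
  proof (rule eq_vecI)
    show "dim_vec (Qm V E f *\<^sub>v w) = dim_vec (mu \<cdot>\<^sub>v w)" unfolding Qm_def w_def n_def by simp
    fix i assume "i < dim_vec (mu \<cdot>\<^sub>v w)"
    then have i: "i < n" unfolding w_def by simp
    have fi: "f i \<in> V" using f i unfolding bij_betw_def n_def by auto
    have "(Qm V E f *\<^sub>v w) $ i = (\<Sum>j\<in>{0..<n}. qc V E (f i) (f j) * x (f j))"
      using i unfolding Qm_def w_def n_def by (simp add: scalar_prod_def)
    also have "\<dots> = (\<Sum>b\<in>V. qc V E (f i) b * x b)"
      using sum.reindex_bij_betw[OF f, of "\<lambda>b. qc V E (f i) b * x b"] unfolding n_def by simp
    also have "\<dots> = mu * x (f i)"
    proof -
      have h1: "signless_laplacian_apply V E x (f i) = (\<Sum>b\<in>V. qc V E (f i) b * x b)" by (rule sla_qc[OF fin fi])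
      have h2: "signless_laplacian_apply V E x (f i) = mu * x (f i)" using xe fi by blast
      from h1 h2 show ?thesis by simp
    qed
    also have "\<dots> = (mu \<cdot>\<^sub>v w) $ i" using i unfolding w_def by simp
    finally show "(Qm V E f *\<^sub>v w) $ i = (mu \<cdot>\<^sub>v w) $ i" .
  qed
  then show ?thesis unfolding eigenvalue_def eigenvector_def using wc w0
    unfolding Qm_def n_def by auto
qed

lemma Qeig_finite:
  assumes sg: "simple_graph V E"
  shows "finite {mu. Q_eigenvalue V E mu}"
proof -
  have fin: "finite V" using sg_fin[OF sg] .
  obtain f where f: "bij_betw f {0..<card V} V" using ex_bij_betw_nat_finite[OF fin] by blast
  have "{mu. Q_eigenvalue V E mu} \<subseteq> spectrum (Qm V E f)"
    unfolding spectrum_def using Qeig_imp_eig[OF sg f] by auto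
  moreover have "finite (spectrum (Qm V E f))"
    by (rule card_finite_spectrum(1)[of _ "card V"]) (simp add: Qm_def)
  ultimately show ?thesis by (rule finite_subset)
qed

lemma complex_eig_real:
  fixes c :: "nat \<Rightarrow> nat \<Rightarrow> real" and z :: "nat \<Rightarrow> complex"
  assumes sym: "\<And>i j. c i j = c j i"
    and eq: "\<And>i. i < n \<Longrightarrow> (\<Sum>j\<in>{0..<n}. complex_of_real (c i j) * z j) = l * z i"
    and nz: "i0 < n" "z i0 \<noteq> 0"
  shows "Im l = 0"
proof -
  define S where "S = (\<Sum>i\<in>{0..<n}. cnj (z i) * (\<Sum>j\<in>{0..<n}. complex_of_real (c i j) * z j))"
  define T where "T = (\<Sum>i\<in>{0..<n}. (Re (z i))\<^sup>2 + (Im (z i))\<^sup>2)"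
  have S1: "S = l * complex_of_real T"
  proof -
    have "S = (\<Sum>i\<in>{0..<n}. l * (z i * cnj (z i)))" unfolding S_def
    proof (rule sum.cong)
      fix i assume "i \<in> {0..<n}"
      then have "(\<Sum>j\<in>{0..<n}. complex_of_real (c i j) * z j) = l * z i" using eq by simp
      then show "cnj (z i) * (\<Sum>j\<in>{0..<n}. complex_of_real (c i j) * z j) = l * (z i * cnj (z i))"
        by (simp add: algebra_simps)
    qed simp
    also have "\<dots> = (\<Sum>i\<in>{0..<n}. l * complex_of_real ((Re (z i))\<^sup>2 + (Im (z i))\<^sup>2))"
      by (simp only: complex_mult_cnj)
    also have "\<dots> = l * (\<Sum>i\<in>{0..<n}. complex_of_real ((Re (z i))\<^sup>2 + (Im (z i))\<^sup>2))"
      by (rule sum_distrib_left[symmetric])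
    also have "\<dots> = l * complex_of_real T" by (simp only: T_def of_real_sum)
    finally show ?thesis .
  qed
  have S2: "cnj S = S"
  proof -
    have A1: "S = (\<Sum>i\<in>{0..<n}. \<Sum>j\<in>{0..<n}. complex_of_real (c i j) * (cnj (z i) * z j))"
      unfolding S_def sum_distrib_left by (rule sum.cong[OF HOL.refl], rule sum.cong[OF HOL.refl]) (simp add: algebra_simps)
    have A2: "cnj S = (\<Sum>i\<in>{0..<n}. \<Sum>j\<in>{0..<n}. complex_of_real (c i j) * (z i * cnj (z j)))"
      unfolding S_def sum_distrib_left cnj_sum by (intro sum.cong HOL.refl) (simp add: algebra_simps)
    have A3: "(\<Sum>i\<in>{0..<n}. \<Sum>j\<in>{0..<n}. complex_of_real (c i j) * (z i * cnj (z j)))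
        = (\<Sum>j\<in>{0..<n}. \<Sum>i\<in>{0..<n}. complex_of_real (c i j) * (z i * cnj (z j)))"
      by (rule sum.swap)
    have A4: "(\<Sum>j\<in>{0..<n}. \<Sum>i\<in>{0..<n}. complex_of_real (c i j) * (z i * cnj (z j)))
        = (\<Sum>j\<in>{0..<n}. \<Sum>i\<in>{0..<n}. complex_of_real (c j i) * (cnj (z j) * z i))"
      by (intro sum.cong HOL.refl) (simp add: sym mult.commute)
    show ?thesis using A1 A2 A3 A4 by simp
  qed
  have Tpos: "0 < T"
  proof -
    have "0 < (Re (z i0))\<^sup>2 + (Im (z i0))\<^sup>2" using nz(2) complex_eq_iff by (auto simp: sum_power2_gt_zero_iff)
    also have "\<dots> \<le> T" unfolding T_def using nz(1) by (intro member_le_sum) auto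
    finally show ?thesis .
  qed
  have "Im (cnj S) = Im S" using S2 by simp
  then have "Im S = 0" by simp
  then have "Im l * T = 0" using S1 by simp
  then show ?thesis using Tpos by simp
qed


lemma real_vec_Qeig:
  assumes sg: "simple_graph V E" and f: "bij_betw f {0..<card V} V"
    and eq: "\<And>i. i < card V \<Longrightarrow> (\<Sum>j\<in>{0..<card V}. qc V E (f i) (f j) * y j) = mu * y i"
    and nz: "i0 < card V" "y i0 \<noteq> 0"
  shows "Q_eigenvalue V E mu"
proof -
  have fin: "finite V" using sg_fin[OF sg] .
  define n where "n = card V"
  define x where "x b = y (inv_into {0..<n} f b)" for b
  have inj: "inj_on f {0..<n}" using f unfolding bij_betw_def n_def by blast
  have xf: "x (f j) = y j" if "j < n" for j unfolding x_def using inv_into_f_f[OF inj] that by simp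
  have "\<forall>v\<in>V. signless_laplacian_apply V E x v = mu * x v"
  proof
    fix a assume a: "a \<in> V"
    have "a \<in> f ` {0..<n}" using f a unfolding n_def by (simp add: bij_betw_def)
    then obtain i where i: "i < n" "a = f i" by auto
    have "signless_laplacian_apply V E x a = (\<Sum>b\<in>V. qc V E a b * x b)" by (rule sla_qc[OF fin a])
    also have "\<dots> = (\<Sum>j\<in>{0..<n}. qc V E a (f j) * x (f j))"
      using sum.reindex_bij_betw[OF f, of "\<lambda>b. qc V E a b * x b"] unfolding n_def by simp
    also have "\<dots> = (\<Sum>j\<in>{0..<n}. qc V E (f i) (f j) * y j)" using i xf by (intro sum.cong HOL.refl) auto
    also have "\<dots> = mu * y i" using eq i unfolding n_def by blast
    also have "\<dots> = mu * x a" using xf i by simp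
    finally show "signless_laplacian_apply V E x a = mu * x a" .
  qed
  moreover have "\<exists>v\<in>V. x v \<noteq> 0"
  proof
    show "f i0 \<in> V" using f nz(1) unfolding bij_betw_def by auto
    show "x (f i0) \<noteq> 0" using xf nz unfolding n_def by simp
  qed
  ultimately show ?thesis unfolding Q_eigenvalue_def by blast
qed

lemma Qeig_nonempty:
  assumes sg: "simple_graph V E" and ne: "V \<noteq> {}"
  shows "\<exists>mu. Q_eigenvalue V E mu"
proof -
  have fin: "finite V" using sg_fin[OF sg] .
  define n where "n = card V"
  have npos: "0 < n" using fin ne unfolding n_def by (simp add: card_gt_0_iff)
  obtain f where f: "bij_betw f {0..<card V} V" using ex_bij_betw_nat_finite[OF fin] by blast
  define Qc where "Qc = map_mat complex_of_real (Qm V E f)"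
  have Qc: "Qc \<in> carrier_mat n n" unfolding Qc_def Qm_def n_def by simp
  from spectrum_non_empty[OF Qc npos] obtain l where "l \<in> spectrum Qc" by blast
  then obtain v where v: "v \<in> carrier_vec n" "v \<noteq> 0\<^sub>v n" "Qc *\<^sub>v v = l \<cdot>\<^sub>v v"
    unfolding spectrum_def eigenvalue_def eigenvector_def using Qc by auto
  define c where "c i j = qc V E (f i) (f j)" for i j
  define z where "z j = v $ j" for j
  have dv: "dim_vec v = n" using v(1) by simp
  have eq: "(\<Sum>j\<in>{0..<n}. complex_of_real (c i j) * z j) = l * z i" if i: "i < n" for i
  proof -
    have "(Qc *\<^sub>v v) $ i = (l \<cdot>\<^sub>v v) $ i" using v(3) by simp
    moreover have "(Qc *\<^sub>v v) $ i = (\<Sum>j\<in>{0..<n}. complex_of_real (c i j) * z j)"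
    proof -
      have "(Qc *\<^sub>v v) $ i = row Qc i \<bullet> v" using i Qc by simp
      also have "\<dots> = (\<Sum>j\<in>{0..<n}. row Qc i $ j * v $ j)" unfolding scalar_prod_def dv ..
      also have "\<dots> = (\<Sum>j\<in>{0..<n}. complex_of_real (c i j) * z j)"
      proof (rule sum.cong[OF HOL.refl])
        fix j assume j: "j \<in> {0..<n}"
        have "row Qc i $ j = Qc $$ (i, j)" using i j Qc by simp
        also have "\<dots> = complex_of_real (Qm V E f $$ (i, j))" unfolding Qc_def using i j by (simp add: Qm_def n_def)
        also have "\<dots> = complex_of_real (c i j)" using i j unfolding Qm_def c_def n_def by simp
        finally show "row Qc i $ j * v $ j = complex_of_real (c i j) * z j" unfolding z_def by simp
      qed
      finally show ?thesis .
    qed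
    moreover have "(l \<cdot>\<^sub>v v) $ i = l * z i" using i dv unfolding z_def by simp
    ultimately show ?thesis by simp
  qed
  obtain i0 where i0: "i0 < n" "z i0 \<noteq> 0"
  proof -
    have "\<exists>i<n. v $ i \<noteq> 0"
    proof (rule ccontr)
      assume "\<not> ?thesis"
      then have "v = 0\<^sub>v n" using dv by (intro eq_vecI) auto
      then show False using v(2) by blast
    qed
    then show ?thesis using that unfolding z_def by blast
  qed
  have sym: "c i j = c j i" for i j unfolding c_def using qc_sym[OF sg] by simp
  have Im0: "Im l = 0" by (rule complex_eig_real[of c n z l i0, OF sym eq i0]) auto
  have eqR: "(\<Sum>j\<in>{0..<n}. c i j * Re (z j)) = Re l * Re (z i)" if "i < n" for i
  proof -
    have "Re (\<Sum>j\<in>{0..<n}. complex_of_real (c i j) * z j) = Re (l * z i)" using eq[OF that] by simp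
    then show ?thesis using Im0 by (simp add: Re_sum)
  qed
  have eqI: "(\<Sum>j\<in>{0..<n}. c i j * Im (z j)) = Re l * Im (z i)" if "i < n" for i
  proof -
    have "Im (\<Sum>j\<in>{0..<n}. complex_of_real (c i j) * z j) = Im (l * z i)" using eq[OF that] by simp
    then show ?thesis using Im0 by (simp add: Im_sum)
  qed
  show ?thesis
  proof (cases "Re (z i0) = 0")
    case False
    have "Q_eigenvalue V E (Re l)"
      by (rule real_vec_Qeig[OF sg f, of "\<lambda>j. Re (z j)" _ i0]) (use eqR False i0 in \<open>auto simp: c_def n_def\<close>)
    then show ?thesis by blast
  next
    case True
    then have "Im (z i0) \<noteq> 0" using i0(2) complex_eq_iff by auto
    have "Q_eigenvalue V E (Re l)"
      by (rule real_vec_Qeig[OF sg f, of "\<lambda>j. Im (z j)" _ i0]) (use eqI \<open>Im (z i0) \<noteq> 0\<close> i0 in \<open>auto simp: c_def n_def\<close>)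
    then show ?thesis by blast
  qed
qed




lemma deg_nb: "Defs.degree V E v = card (nb V E v)"
  unfolding Defs.degree_def nb_def by simp

lemma big_card:
  assumes sg: "simple_graph V E" and no: "\<not> has_K33_minor V E"
  shows "card {w\<in>V. (2*real (card V)+2)/3 < real (card (nb V E w))} \<le> 2"
proof (rule ccontr)
  define T where "T = {w\<in>V. (2*real (card V)+2)/3 < real (card (nb V E w))}"
  assume "\<not> card {w\<in>V. (2*real (card V)+2)/3 < real (card (nb V E w))} \<le> 2"
  then have "3 \<le> card T" unfolding T_def by simp
  then obtain S where S: "S \<subseteq> T" "card S = 3"
  proof (rule obtain_subset_with_card_n)
    fix S assume "S \<subseteq> T" "card S = 3" "finite S" then show ?thesis using that by blast
  qed
  then obtain a b c where abc: "S = {a, b, c}" "a \<noteq> b" "b \<noteq> c" "a \<noteq> c" unfolding card_3_iff by blast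
  have in_T: "a \<in> T" "b \<in> T" "c \<in> T" using S(1) abc(1) by auto
  have V: "a \<in> V" "b \<in> V" "c \<in> V" using in_T unfolding T_def by auto
  have "card (nb V E a) + card (nb V E b) + card (nb V E c) \<le> 2 * card V + 2"
    by (rule deg3[OF sg no V abc(2-4)])
  then have "real (card (nb V E a)) + real (card (nb V E b)) + real (card (nb V E c)) \<le> 2 * real (card V) + 2"
    by (metis of_nat_add of_nat_le_iff of_nat_mult of_nat_numeral)
  moreover have "2 * real (card V) + 2 < 3 * real (card (nb V E a))" "2 * real (card V) + 2 < 3 * real (card (nb V E b))"
     "2 * real (card V) + 2 < 3 * real (card (nb V E c))" using in_T unfolding T_def by (simp_all add: field_simps)
  ultimately show False by linarith
qed

theorem lemma4p2:
  fixes V :: "'a set" and E :: "'a \<Rightarrow> 'a \<Rightarrow> bool"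
  assumes "simple_graph V E"
    and "edge_maximal_K33_minor_free V E"
    and "card V \<ge> 374"
    and "card V - 3 \<le> max_degree V E"
    and "max_degree V E \<le> card V - 2"
  shows "q_index V E \<le> real (card V) + 2"
proof -
  note sg = assms(1)
  have no: "\<not> has_K33_minor V E" using assms(2) unfolding edge_maximal_K33_minor_free_def by blast
  have noK: "\<not> hasK 3 V E" using no hasK3_K33 by blast
  have fin: "finite V" using sg_fin[OF sg] .
  have ne: "V \<noteq> {}" using assms(3) by auto
  define n where "n = real (card V)"
  define m where "m = n + 2"
  define A where "A = 3 * m / 2"
  have n374: "374 \<le> n" using assms(3) unfolding n_def by simp
  have mpos: "0 < m" using n374 unfolding m_def by simp
  define d where "d v = real (Defs.degree V E v)" for v
  have dnb: "d v = real (card (nb V E v))" for v unfolding d_def deg_nb ..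
  have dle: "d v \<le> n - 2" if "v \<in> V" for v
  proof -
    have "Defs.degree V E v \<le> max_degree V E" unfolding max_degree_def using fin that by (intro Max_ge) auto
    then have "Defs.degree V E v \<le> card V - 2" using assms(5) by linarith
    then show ?thesis unfolding d_def n_def using assms(3) by (simp add: of_nat_diff)
  qed
  have dge: "0 \<le> d v" for v unfolding d_def by simp
  have Dlt: "real (Dg V E) < 12 * n"
  proof -
    have "Dg V E < 12 * card V" by (rule edge_bound[OF sg noK ne])
    then show ?thesis unfolding n_def by linarith
  qed
  define g where "g v = (d v + A) / (m - d v)" for v
  have mdpos: "4 \<le> m - d v" if "v \<in> V" for v using dle[OF that] unfolding m_def by simp
  have gpos: "\<forall>v\<in>V. 0 < g v"
  proof
    fix v assume v: "v \<in> V"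
    have "0 < d v + A" using dge[of v] mpos unfolding A_def by simp
    then show "0 < g v" unfolding g_def using mdpos[OF v] by simp
  qed
  have cond: "\<forall>v\<in>V. real (Defs.degree V E v) * g v + (\<Sum>u\<in>{u \<in> V. E v u}. g u) \<le> m * g v"
  proof
    fix v assume v: "v \<in> V"
    define N where "N = {u \<in> V. E v u}"
    have NV: "N \<subseteq> V" unfolding N_def by auto
    have finN: "finite N" using fin NV by (rule finite_subset[rotated])
    have cN: "real (card N) = d v" unfolding N_def d_def Defs.degree_def by simp
    have VI: "(\<Sum>w\<in>N. 1/(n + 2 - d w)) \<le> (4*real (card N) + 3*(n+2))/(5*(n+2))"
    proof (rule vertex_ineq[OF n374 finN, where D = "real (Dg V E)"])
      show "real (card N) \<le> n - 2" using cN dle[OF v] by simp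
      show "\<forall>w\<in>N. 0 \<le> d w \<and> d w \<le> n - 2" using dge dle NV by auto
      show "(\<Sum>w\<in>N. d w) \<le> real (Dg V E)"
      proof -
        have "(\<Sum>w\<in>N. d w) \<le> (\<Sum>w\<in>V. d w)" by (rule sum_mono2[OF fin NV]) (use dge in auto)
        also have "\<dots> = real (Dg V E)" unfolding Dg_def dnb by simp
        finally show ?thesis .
      qed
      show "real (Dg V E) < 12 * n" by (rule Dlt)
      have "{w\<in>N. (2*n+2)/3 < d w} \<subseteq> {w\<in>V. (2*real (card V)+2)/3 < real (card (nb V E w))}"
        using NV unfolding n_def dnb by auto
      then have "card {w\<in>N. (2*n+2)/3 < d w} \<le> card {w\<in>V. (2*real (card V)+2)/3 < real (card (nb V E w))}"
        by (rule card_mono[rotated]) (use fin in auto)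
      then show "card {w\<in>N. (2*n+2)/3 < d w} \<le> 2" using big_card[OF sg no] by linarith
      show "\<forall>b1\<in>N. \<forall>b2\<in>N. b1 \<noteq> b2 \<longrightarrow> (2*n+2)/3 < d b1 \<longrightarrow> (2*n+2)/3 < d b2 \<longrightarrow>
                 real (card N) + d b1 + d b2 \<le> 2*n+2"
      proof (intro ballI impI)
        fix b1 b2 assume b: "b1 \<in> N" "b2 \<in> N" "b1 \<noteq> b2"
        have vb: "v \<noteq> b1" "v \<noteq> b2" "b1 \<in> V" "b2 \<in> V" using b sgD[OF sg] unfolding N_def by auto
        have "card (nb V E v) + card (nb V E b1) + card (nb V E b2) \<le> 2 * card V + 2"
          by (rule deg3[OF sg no v vb(3,4) vb(1) b(3) vb(2)])
        then have "real (card (nb V E v)) + real (card (nb V E b1)) + real (card (nb V E b2)) \<le> 2 * real (card V) + 2"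
          by (metis of_nat_add of_nat_le_iff of_nat_mult of_nat_numeral)
        then show "real (card N) + d b1 + d b2 \<le> 2*n+2" using cN unfolding dnb n_def by simp
      qed
    qed
    have gw: "g w = (A + m) * (1/(n + 2 - d w)) - 1" if "w \<in> N" for w
    proof -
      have "0 < m - d w" using mdpos[of w] that NV by force
      then show ?thesis unfolding g_def m_def by (simp add: field_simps)
    qed
    have "(\<Sum>u\<in>N. g u) = (\<Sum>u\<in>N. (A + m) * (1/(n + 2 - d u)) - 1)" using gw by (rule sum.cong[OF HOL.refl])
    also have "\<dots> = (A + m) * (\<Sum>u\<in>N. 1/(n + 2 - d u)) - real (card N)"
      by (simp add: sum_subtractf sum_distrib_left)
    also have "\<dots> \<le> (A + m) * ((4*real (card N) + 3*(n+2))/(5*(n+2))) - real (card N)"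
      using VI mpos unfolding A_def by (intro diff_right_mono mult_left_mono) auto
    also have "\<dots> = d v + A" using mpos cN unfolding A_def m_def by (simp add: field_simps)
    finally have S: "(\<Sum>u\<in>N. g u) \<le> d v + A" .
    have gv: "(m - d v) * g v = d v + A" unfolding g_def using mdpos[OF v] by simp
    have "real (Defs.degree V E v) * g v + (\<Sum>u\<in>N. g u) \<le> d v * g v + (m - d v) * g v"
      using S gv unfolding d_def by simp
    also have "\<dots> = m * g v" by (simp add: algebra_simps)
    finally show "real (Defs.degree V E v) * g v + (\<Sum>u\<in>{u \<in> V. E v u}. g u) \<le> m * g v" unfolding N_def .
  qed
  have allb: "\<forall>mu\<in>{mu. Q_eigenvalue V E mu}. mu \<le> m"
    using eig_bound[OF sg gpos cond] by blast
  have "q_index V E \<le> m" unfolding q_index_def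
    using Qeig_finite[OF sg] Qeig_nonempty[OF sg ne] allb by (intro Max.boundedI) auto
  then show ?thesis unfolding m_def n_def .
qed


end
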